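(* Consider the planted clique problem with $\rho\le1/2$. Let $\ell\ge0$ be an integer, $D=2\ell+1$, and $f(Y)=\tau_\ell\Big(\frac{2}{\rho}\Big(\frac{1}{n-1}\sum_{i=2}^nY_{1i}-\frac12\Big)\Big)$. For any $0<r<1$, if $\rho^2\ge\frac{432}{r^2(n-1)}\big[\log4+3D\log(9/\rho)\big]$, then $\mathbb{E}(f(Y)-x)^2\le D^2r^{D-1}$.
   Context: Planted clique problem: $v\in\{0,1\}^n$ has i.i.d. $\mathrm{Bernoulli}(\rho)$ entries, $\rho\in(0,1)$; conditionally on $v$, for each pair $i<j$ independently, $Y_{ij}=1$ if $v_iv_j=1$ and otherwise $Y_{ij}\sim\mathrm{Bernoulli}(1/2)$; $Y_{1i}$ is the entry for pair $\{1,i\}$; target $x=v_1$. $\tau_\ell(y)=(2\ell+1)\binom{2\ell}{\ell}\int_0^yt^\ell(1-t)^\ell\,dt$, a polynomial of degree $2\ell+1$. Logarithms are natural. *)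

theory Defs
  imports "HOL-Probability.Probability"
begin

text \<open>Vertices are 1..n; unordered pairs are represented as (i,j) with 1 \<le> i < j \<le> n.\<close>

definition pc_pairs :: "nat \<Rightarrow> (nat \<times> nat) set" where
  "pc_pairs n = {(i, j). 1 \<le> i \<and> i < j \<and> j \<le> n}"

definition pc_v_pmf :: "nat \<Rightarrow> real \<Rightarrow> (nat \<Rightarrow> bool) pmf" where
  "pc_v_pmf n \<rho> = Pi_pmf {1..n} False (\<lambda>_. bernoulli_pmf \<rho>)"

definition pc_Y_pmf :: "nat \<Rightarrow> (nat \<Rightarrow> bool) \<Rightarrow> (nat \<times> nat \<Rightarrow> bool) pmf" where
  "pc_Y_pmf n v = Pi_pmf (pc_pairs n) False
     (\<lambda>(i, j). if v i \<and> v j then return_pmf True else bernoulli_pmf (1/2))"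

definition planted_clique :: "nat \<Rightarrow> real \<Rightarrow> ((nat \<Rightarrow> bool) \<times> (nat \<times> nat \<Rightarrow> bool)) pmf" where
  "planted_clique n \<rho> = do { v \<leftarrow> pc_v_pmf n \<rho>; Y \<leftarrow> pc_Y_pmf n v; return_pmf (v, Y) }"

definition tau :: "nat \<Rightarrow> real \<Rightarrow> real" where
  "tau l y = real (2*l+1) * real ((2*l) choose l) *
     (LBINT t=0..y. t ^ l * (1 - t) ^ l)"

definition pc_estimator :: "nat \<Rightarrow> real \<Rightarrow> nat \<Rightarrow> (nat \<times> nat \<Rightarrow> bool) \<Rightarrow> real" where
  "pc_estimator n \<rho> l Y =
     tau l ((2 / \<rho>) * ((1 / (real n - 1)) * (\<Sum>i=2..n. of_bool (Y (1, i))) - 1/2))"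

end

theory Submission
  imports Defs
begin


definition P :: "nat \<Rightarrow> real \<Rightarrow> real" where
  "P l y = (\<Sum>k\<le>l. real (l choose k) * (-1)^k / real (l+k+1) * y^(l+k+1))"

lemma P_deriv: "(P l has_real_derivative (y^l * (1-y)^l)) (at y within S)"
proof -
  have "(P l has_real_derivative (\<Sum>k\<le>l. real (l choose k) * (-1)^k / real (l+k+1) * (real (l+k+1) * y^(l+k+1 - Suc 0)))) (at y within S)"
    unfolding P_def
    by (intro DERIV_sum DERIV_cmult DERIV_pow)
  moreover have "(\<Sum>k\<le>l. real (l choose k) * (-1)^k / real (l+k+1) * (real (l+k+1) * y^(l+k+1 - Suc 0))) = (\<Sum>k\<le>l. real (l choose k) * (-1)^k * y^(l+k))"
    by (rule sum.cong) (simp_all del: of_nat_add of_nat_Suc)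
  moreover have "(\<Sum>k\<le>l. real (l choose k) * (-1)^k * y^(l+k)) = y^l * (1-y)^l"
  proof -
    have "(1-y)^l = ((-y) + 1)^l" by simp
    also have "\<dots> = (\<Sum>k\<le>l. real (l choose k) * (-y)^k * 1^(l-k))" by (rule binomial_ring)
    finally have e: "(1-y)^l = (\<Sum>k\<le>l. real (l choose k) * (-y)^k)" by simp
    have "(\<Sum>k\<le>l. real (l choose k) * (-1)^k * y^(l+k)) = (\<Sum>k\<le>l. y^l * (real (l choose k) * (-y)^k))"
      by (rule sum.cong) (simp_all add: power_add power_minus[of y])
    also have "\<dots> = y^l * (1-y)^l" by (simp add: e sum_distrib_left)
    finally show ?thesis .
  qed
  ultimately show ?thesis by (simp only:)
qed

lemma P0: "P l 0 = 0" by (simp add: P_def)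

lemma tau_P: "tau l y = real (2*l+1) * real ((2*l) choose l) * P l y"
proof -
  have "(LBINT t=ereal 0..ereal y. t ^ l * (1 - t) ^ l) = P l y - P l 0"
  proof (rule interval_integral_FTC_finite)
    show "continuous_on {min 0 y..max 0 y} (\<lambda>t. t ^ l * (1 - t) ^ l)"
      by (auto intro!: continuous_intros)
    fix x show "(P l has_vector_derivative x ^ l * (1 - x) ^ l) (at x within {min 0 y..max 0 y})"
      using P_deriv by (simp add: has_real_derivative_iff_has_vector_derivative[symmetric])
  qed
  thus ?thesis by (simp add: tau_def P0 zero_ereal_def)
qed

lemma P1: "real (2*l+1) * real ((2*l) choose l) * P l 1 = 1"
proof -
  have h1: "((\<lambda>t. t^l*(1-t)^l) has_integral (P l 1 - P l 0)) {0..1}"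
    by (rule fundamental_theorem_of_calculus)
       (auto simp: has_real_derivative_iff_has_vector_derivative[symmetric] P_deriv)
  hence h1': "((\<lambda>t. t^l*(1-t)^l) has_integral (P l 1)) {0<..<1}"
    by (simp add: has_integral_Icc_iff_Ioo P0)
  have h2: "((\<lambda>t. t powr (real l + 1 - 1) * (1 - t) powr (real l + 1 - 1)) has_integral Beta (real l + 1) (real l + 1)) {0..1}"
    by (rule has_integral_Beta_real) auto
  hence "((\<lambda>t. t powr (real l + 1 - 1) * (1 - t) powr (real l + 1 - 1)) has_integral Beta (real l + 1) (real l + 1)) {0<..<1}"
    by (simp add: has_integral_Icc_iff_Ioo)
  hence h2': "((\<lambda>t. t^l*(1-t)^l) has_integral Beta (real l + 1) (real l + 1)) {0<..<1}"
    by (rule has_integral_eq[rotated]) (auto simp: powr_realpow)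
  have eq: "P l 1 = Beta (real l + 1) (real l + 1)"
    using h1' h2' by (rule has_integral_unique)
  have g1: "Gamma (real l + 1) = fact l" using Gamma_fact[of l] by (simp add: add.commute)
  have g2: "Gamma (real l + 1 + (real l + 1)) = fact (2*l+1)"
  proof -
    have "real l + 1 + (real l + 1) = 1 + real (2*l+1)" by simp
    thus ?thesis using Gamma_fact[of "2*l+1", where 'a=real] by (simp only:)
  qed
  have B: "Beta (real l + 1) (real l + 1) = fact l * fact l / fact (2*l+1)"
    unfolding Beta_def g1 g2 by (rule refl)
  have C: "real ((2*l) choose l) = fact (2*l) / (fact l * fact l)"
    using binomial_fact[of l "2*l", where 'a=real] by (simp add: mult_2)
  have F: "(fact (2*l+1) :: real) = real (2*l+1) * fact (2*l)"
    by (simp add: fact_Suc del: of_nat_mult of_nat_add)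
  have n1: "real (2*l+1) \<noteq> 0" by (simp del: of_nat_add of_nat_mult)
  have n2: "(fact (2*l)::real) \<noteq> 0" "(fact l::real) \<noteq> 0" by simp_all
  show ?thesis unfolding eq B C F using n1 n2 by (simp only: field_simps) simp
qed

lemma zbound:
  assumes a: "a = 0 \<or> a = (1::real)" and z: "min a y \<le> z" "z \<le> max a y"
  shows "\<bar>z^l * (1-z)^l\<bar> \<le> (\<bar>y-a\<bar> * (1 + \<bar>y-a\<bar>))^l"
proof -
  have "\<bar>z\<bar> * \<bar>1-z\<bar> \<le> \<bar>y-a\<bar> * (1 + \<bar>y-a\<bar>)"
  proof (cases "a = 0")
    case True
    hence "\<bar>z\<bar> \<le> \<bar>y-a\<bar>" "\<bar>1-z\<bar> \<le> 1 + \<bar>y-a\<bar>" using z by (auto simp: min_def max_def split: if_splits)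
    thus ?thesis by (intro mult_mono) auto
  next
    case False
    hence "a = 1" using a by auto
    hence "\<bar>1-z\<bar> \<le> \<bar>y-a\<bar>" "\<bar>z\<bar> \<le> 1 + \<bar>y-a\<bar>" using z by (auto simp: min_def max_def split: if_splits)
    thus ?thesis by (subst mult.commute, intro mult_mono) auto
  qed
  moreover have "\<bar>z^l * (1-z)^l\<bar> = (\<bar>z\<bar> * \<bar>1-z\<bar>)^l"
    by (simp add: abs_mult power_abs power_mult_distrib)
  ultimately show ?thesis by (simp add: power_mono)
qed

lemma P_diff:
  assumes a: "a = 0 \<or> a = (1::real)"
  shows "\<bar>P l y - P l a\<bar> \<le> \<bar>y - a\<bar> * (\<bar>y-a\<bar> * (1 + \<bar>y-a\<bar>))^l"
proof -
  consider "y = a" | "a < y" | "y < a" by linarith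
  thus ?thesis
  proof cases
    case 1 thus ?thesis by simp
  next
    case 2
    obtain z where z: "a < z" "z < y" "P l y - P l a = (y - a) * (z^l * (1-z)^l)"
      using MVT2[OF 2, of "P l" "\<lambda>t. t^l*(1-t)^l"] P_deriv by blast
    have "\<bar>z^l * (1-z)^l\<bar> \<le> (\<bar>y-a\<bar> * (1 + \<bar>y-a\<bar>))^l"
      using z by (intro zbound[OF a]) auto
    thus ?thesis unfolding z(3) abs_mult by (intro mult_left_mono) auto
  next
    case 3
    obtain z where z: "y < z" "z < a" "P l a - P l y = (a - y) * (z^l * (1-z)^l)"
      using MVT2[OF 3, of "P l" "\<lambda>t. t^l*(1-t)^l"] P_deriv by blast
    have "\<bar>z^l * (1-z)^l\<bar> \<le> (\<bar>y-a\<bar> * (1 + \<bar>y-a\<bar>))^l"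
      using z by (intro zbound[OF a]) auto
    moreover have "\<bar>P l y - P l a\<bar> = \<bar>y - a\<bar> * \<bar>z^l * (1-z)^l\<bar>"
      using z(3) 3 by (simp add: abs_mult abs_minus_commute)
    ultimately show ?thesis by (simp add: mult_left_mono)
  qed
qed

lemma tau_diff:
  assumes a: "a = 0 \<or> a = (1::real)"
  shows "\<bar>tau l y - a\<bar> \<le> real (2*l+1) * 4^l * (\<bar>y - a\<bar> * (\<bar>y-a\<bar> * (1 + \<bar>y-a\<bar>))^l)"
proof -
  define K where "K = real (2*l+1) * real ((2*l) choose l)"
  have Ka: "K * P l a = a" using a P1[of l] P0[of l] by (auto simp: K_def)
  have "tau l y - a = K * (P l y - P l a)" using Ka by (simp add: tau_P K_def algebra_simps)
  hence "\<bar>tau l y - a\<bar> = K * \<bar>P l y - P l a\<bar>" by (simp add: abs_mult K_def)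
  also have "\<dots> \<le> real (2*l+1) * 4^l * (\<bar>y - a\<bar> * (\<bar>y-a\<bar> * (1 + \<bar>y-a\<bar>))^l)"
  proof -
    have "real ((2*l) choose l) \<le> 4^l"
    proof -
      have "(2*l) choose l \<le> 2^(2*l)" by (rule binomial_le_pow2)
      also have "(2::nat)^(2*l) = 4^l" by (simp add: power_mult)
      finally show ?thesis by (metis of_nat_le_iff of_nat_numeral of_nat_power)
    qed
    hence "K \<le> real (2*l+1) * 4^l" unfolding K_def by (intro mult_left_mono) auto
    thus ?thesis using P_diff[OF a, of l y] by (intro mult_mono) (auto simp: K_def)
  qed
  finally show ?thesis .
qed



lemma finite_pairs: "finite (pc_pairs n)"
proof -
  have "pc_pairs n \<subseteq> {1..n} \<times> {1..n}" by (auto simp: pc_pairs_def)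
  thus ?thesis by (rule finite_subset) auto
qed

lemma prod_pairs1:
  fixes h :: "nat \<times> nat \<Rightarrow> real"
  shows "(\<Prod>p\<in>pc_pairs n. if fst p = 1 then h p else 1) = (\<Prod>i\<in>{2..n}. h (1,i))"
proof -
  have "(\<Prod>p\<in>pc_pairs n. if fst p = 1 then h p else 1) = (\<Prod>p\<in>{p\<in>pc_pairs n. fst p = 1}. h p)"
    by (rule prod.inter_filter[OF finite_pairs, symmetric])
  also have "{p\<in>pc_pairs n. fst p = 1} = Pair 1 ` {2..n}"
    by (auto simp: pc_pairs_def image_iff)
  also have "(\<Prod>p\<in>Pair 1 ` {2..n}. h p) = (\<Prod>i\<in>{2..n}. h (1,i))"
    by (subst prod.reindex) (auto simp: inj_on_def)
  finally show ?thesis .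
qed

lemma fin_v: "finite (set_pmf (pc_v_pmf n \<rho>))"
  unfolding pc_v_pmf_def by (subst set_Pi_pmf) (auto intro!: finite_PiE_dflt)

lemma fin_Y: "finite (set_pmf (pc_Y_pmf n v))"
  unfolding pc_Y_pmf_def using finite_pairs by (subst set_Pi_pmf) (auto intro!: finite_PiE_dflt)

lemma Y_mgf:
  fixes c :: real
  shows
  "measure_pmf.expectation (pc_Y_pmf n v) (\<lambda>Y. exp (c * (\<Sum>i=2..n. of_bool (Y(1,i)))))
    = (\<Prod>i\<in>{2..n}. if v 1 \<and> v i then exp c else (1 + exp c)/2)"
proof -
  define g where "g = (\<lambda>(p::nat\<times>nat) b. if fst p = 1 then exp (c * of_bool b) else (1::real))"
  define law where "law = (\<lambda>(i::nat, j::nat). if v i \<and> v j then return_pmf True else bernoulli_pmf (1/2))"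
  have 1: "exp (c * (\<Sum>i=2..n. of_bool (Y(1,i)))) = (\<Prod>p\<in>pc_pairs n. g p (Y p))" for Y :: "nat\<times>nat \<Rightarrow> bool"
  proof -
    have "exp (c * (\<Sum>i=2..n. of_bool (Y(1,i)))) = (\<Prod>i\<in>{2..n}. exp (c * of_bool (Y(1,i))))"
      by (simp only: sum_distrib_left) (rule exp_sum, simp)
    also have "\<dots> = (\<Prod>p\<in>pc_pairs n. if fst p = 1 then exp (c * of_bool (Y p)) else 1)"
      by (rule prod_pairs1[symmetric])
    finally show ?thesis by (simp add: g_def)
  qed
  have "measure_pmf.expectation (pc_Y_pmf n v) (\<lambda>Y. exp (c * (\<Sum>i=2..n. of_bool (Y(1,i)))))
      = measure_pmf.expectation (Pi_pmf (pc_pairs n) False law) (\<lambda>Y. \<Prod>p\<in>pc_pairs n. g p (Y p))"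
    unfolding 1 pc_Y_pmf_def law_def by simp
  also have "\<dots> = (\<Prod>p\<in>pc_pairs n. measure_pmf.expectation (law p) (g p))"
  proof (rule expectation_prod_Pi_pmf[OF finite_pairs])
    fix p assume "p \<in> pc_pairs n"
    have "finite (set_pmf (law p))" by (rule finite_subset[OF subset_UNIV]) simp
    thus "integrable (measure_pmf (law p)) (g p)" by (rule integrable_measure_pmf_finite)
  next
    fix p y show "0 \<le> g p y" by (simp add: g_def)
  qed
  also have "\<dots> = (\<Prod>p\<in>pc_pairs n. if fst p = 1 then (if v 1 \<and> v (snd p) then exp c else (1 + exp c)/2) else 1)"
    by (rule prod.cong) (auto simp: law_def g_def)
  also have "\<dots> = (\<Prod>i\<in>{2..n}. if v 1 \<and> v i then exp c else (1 + exp c)/2)"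
    using prod_pairs1[where h="\<lambda>p. if v 1 \<and> v (snd p) then exp c else (1+exp c)/2"] by simp
  finally show ?thesis .
qed

lemma prod_split1:
  fixes n :: nat and f :: "nat \<Rightarrow> real"
  shows "1 \<le> n \<Longrightarrow> (\<Prod>i\<in>{1..n}. f i) = f 1 * (\<Prod>i\<in>{2..n}. f i)"
  using prod.atLeast_Suc_atMost[of 1 n f] by (simp add: numeral_2_eq_2)

lemma prod_if1:
  fixes n :: nat and a b :: "nat \<Rightarrow> real"
  shows "(\<Prod>i\<in>{2..n}. if i = 1 then a i else b i) = (\<Prod>i\<in>{2..n}. b i)"
  by (rule prod.cong) auto

lemma v_mgf:
  fixes K m :: "bool \<Rightarrow> real"
  assumes n: "1 \<le> n" and r: "0 \<le> \<rho>" "\<rho> \<le> 1" and m: "\<And>b. 0 \<le> m b"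
  shows "measure_pmf.expectation (pc_v_pmf n \<rho>) (\<lambda>v. K (v 1) * (\<Prod>i\<in>{2..n}. m (v 1 \<and> v i)))
    = \<rho> * K True * (\<rho> * m True + (1-\<rho>) * m False)^(n-1) + (1-\<rho>) * K False * m False^(n-1)"
proof -
  define h1 where "h1 = (\<lambda>i b. if i = (1::nat) then of_bool b else m b)"
  define h0 where "h0 = (\<lambda>i b. if i = (1::nat) then of_bool (\<not> b) else (1::real))"
  have fin: "finite (set_pmf (pc_v_pmf n \<rho>))" by (rule fin_v)
  have pw: "K (v 1) * (\<Prod>i\<in>{2..n}. m (v 1 \<and> v i)) =
     K True * (\<Prod>i\<in>{1..n}. h1 i (v i)) + K False * m False^(n-1) * (\<Prod>i\<in>{1..n}. h0 i (v i))" for v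
  proof -
    have a: "(\<Prod>i\<in>{1..n}. h1 i (v i)) = of_bool (v 1) * (\<Prod>i\<in>{2..n}. m (v i))"
      unfolding prod_split1[OF n] h1_def prod_if1 by simp
    have b: "(\<Prod>i\<in>{1..n}. h0 i (v i)) = of_bool (\<not> v 1)"
      unfolding prod_split1[OF n] h0_def prod_if1 by simp
    show ?thesis unfolding a b by (cases "v 1") simp_all
  qed
  have int: "integrable (measure_pmf (pc_v_pmf n \<rho>)) f" for f :: "_ \<Rightarrow> real"
    by (rule integrable_measure_pmf_finite[OF fin])
  have E1: "measure_pmf.expectation (pc_v_pmf n \<rho>) (\<lambda>v. \<Prod>i\<in>{1..n}. h1 i (v i)) = \<rho> * (\<rho> * m True + (1-\<rho>) * m False)^(n-1)"
  proof -
    have "measure_pmf.expectation (pc_v_pmf n \<rho>) (\<lambda>v. \<Prod>i\<in>{1..n}. h1 i (v i)) = (\<Prod>i\<in>{1..n}. measure_pmf.expectation (bernoulli_pmf \<rho>) (h1 i))"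
      unfolding pc_v_pmf_def
      by (rule expectation_prod_Pi_pmf) (auto intro!: integrable_measure_pmf_finite simp: h1_def m)
    also have "\<dots> = \<rho> * (\<Prod>i\<in>{2..n}. (\<rho> * m True + (1-\<rho>) * m False))"
      unfolding prod_split1[OF n] h1_def prod_if1 using r by (simp add: mult.commute)
    finally show ?thesis by simp
  qed
  have E0: "measure_pmf.expectation (pc_v_pmf n \<rho>) (\<lambda>v. \<Prod>i\<in>{1..n}. h0 i (v i)) = 1 - \<rho>"
  proof -
    have "measure_pmf.expectation (pc_v_pmf n \<rho>) (\<lambda>v. \<Prod>i\<in>{1..n}. h0 i (v i)) = (\<Prod>i\<in>{1..n}. measure_pmf.expectation (bernoulli_pmf \<rho>) (h0 i))"
      unfolding pc_v_pmf_def
      by (rule expectation_prod_Pi_pmf) (auto intro!: integrable_measure_pmf_finite simp: h0_def)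
    also have "\<dots> = 1 - \<rho>"
      unfolding prod_split1[OF n] h0_def prod_if1 using r by simp
    finally show ?thesis .
  qed
  have "measure_pmf.expectation (pc_v_pmf n \<rho>) (\<lambda>v. K (v 1) * (\<Prod>i\<in>{2..n}. m (v 1 \<and> v i)))
     = measure_pmf.expectation (pc_v_pmf n \<rho>) (\<lambda>v. K True * (\<Prod>i\<in>{1..n}. h1 i (v i)))
       + measure_pmf.expectation (pc_v_pmf n \<rho>) (\<lambda>v. K False * m False^(n-1) * (\<Prod>i\<in>{1..n}. h0 i (v i)))"
    unfolding pw by (rule Bochner_Integration.integral_add[OF int int])
  also have "\<dots> = K True * measure_pmf.expectation (pc_v_pmf n \<rho>) (\<lambda>v. (\<Prod>i\<in>{1..n}. h1 i (v i)))
       + K False * m False^(n-1) * measure_pmf.expectation (pc_v_pmf n \<rho>) (\<lambda>v. (\<Prod>i\<in>{1..n}. h0 i (v i)))"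
    by (simp only: integral_mult_right_zero)
  finally show ?thesis unfolding E1 E0 by simp

qed



lemma bern_mgf:
  fixes p c :: real
  assumes p: "0 \<le> p" "p \<le> 1"
  shows "1 - p + p * exp c \<le> exp (p * c + c^2 / 8)"
proof (cases "c \<ge> 0")
  case True
  have pos: "0 < 1 + p * (exp c - 1)" using p True by (intro add_pos_nonneg) auto
  have "-c * p + ln (1 + p * (exp c - 1)) \<le> c^2/8"
    using Hoeffdings_lemma_aux[of c p] True p by simp
  hence "ln (1 + p * (exp c - 1)) \<le> p * c + c^2/8" by (simp add: algebra_simps)
  hence "exp (ln (1 + p * (exp c - 1))) \<le> exp (p * c + c^2/8)" by simp
  hence "1 + p * (exp c - 1) \<le> exp (p * c + c^2/8)" using pos by simp
  thus ?thesis by (simp add: algebra_simps)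
next
  case False
  have pos: "0 < 1 + (1-p) * (exp (-c) - 1)" using p False by (intro add_pos_nonneg) auto
  have "-(-c) * (1-p) + ln (1 + (1-p) * (exp (-c) - 1)) \<le> (-c)^2/8"
    using Hoeffdings_lemma_aux[of "-c" "1-p"] False p by simp
  hence "ln (1 + (1-p) * (exp (-c) - 1)) \<le> -c * (1-p) + c^2/8" by (simp add: algebra_simps)
  hence "exp (ln (1 + (1-p) * (exp (-c) - 1))) \<le> exp (-c * (1-p) + c^2/8)" by simp
  hence "1 + (1-p) * (exp (-c) - 1) \<le> exp (-c * (1-p) + c^2/8)" using pos by simp
  hence "exp c * (1 + (1-p) * (exp (-c) - 1)) \<le> exp c * exp (-c * (1-p) + c^2/8)"
    by (intro mult_left_mono) auto
  moreover have "exp c * (1 + (1-p) * (exp (-c) - 1)) = 1 - p + p * exp c"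
    by (simp add: algebra_simps exp_minus)
  moreover have "exp c * exp (-c * (1-p) + c^2/8) = exp (p * c + c^2 / 8)"
    by (simp add: exp_add[symmetric] algebra_simps)
  ultimately show ?thesis by simp
qed

lemma pow_bound:
  fixes q x :: real and k :: nat
  assumes "0 \<le> q" "q \<le> exp x"
  shows "q ^ k \<le> exp (real k * x)"
  using power_mono[OF assms(2) assms(1), of k] by (simp add: exp_of_nat_mult)

lemma mgf_real:
  fixes \<mu> \<rho> :: real and n :: nat
  assumes n: "2 \<le> n" and r: "0 < \<rho>" "\<rho> \<le> 1"
  defines "c \<equiv> \<mu> * 2 / (\<rho> * (real n - 1))"
  shows "\<rho> * exp (-\<mu>/\<rho> - \<mu>) * (\<rho> * exp c + (1-\<rho>) * ((1 + exp c)/2))^(n-1)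
       + (1-\<rho>) * exp (-\<mu>/\<rho>) * ((1 + exp c)/2)^(n-1) \<le> exp (\<mu>^2 / (2 * \<rho>^2 * (real n - 1)))"
proof -
  define N where "N = real (n - 1)"
  have N: "real n - 1 = N" "N > 0" using n by (auto simp: N_def)
  define E where "E = \<mu>^2 / (2 * \<rho>^2 * N)"
  define p1 where "p1 = (1 + \<rho>)/2"
  have q1: "\<rho> * exp c + (1-\<rho>) * ((1 + exp c)/2) = 1 - p1 + p1 * exp c" by (simp add: p1_def field_simps)
  have q0: "(1 + exp c)/2 = 1 - 1/2 + 1/2 * exp c" by simp
  have e1: "N * (p1 * c + c^2/8) = \<mu>/\<rho> + \<mu> + E"
    using N r unfolding c_def E_def p1_def by (simp add: field_simps power2_eq_square)
  have e0: "N * (1/2 * c + c^2/8) = \<mu>/\<rho> + E"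
    using N r unfolding c_def E_def by (simp add: field_simps power2_eq_square)
  have b1: "(1 - p1 + p1 * exp c)^(n-1) \<le> exp (N * (p1 * c + c^2/8))"
    unfolding N_def using r
    by (intro pow_bound bern_mgf) (auto simp: p1_def intro!: add_nonneg_nonneg mult_nonneg_nonneg)
  have b0: "(1 - 1/2 + 1/2 * exp c)^(n-1) \<le> exp (N * (1/2 * c + c^2/8))"
    unfolding N_def
    by (intro pow_bound bern_mgf) (auto intro!: add_nonneg_nonneg mult_nonneg_nonneg)
  have t1: "exp (-\<mu>/\<rho> - \<mu>) * (1 - p1 + p1 * exp c)^(n-1) \<le> exp E"
  proof -
    have "exp (-\<mu>/\<rho> - \<mu>) * (1 - p1 + p1 * exp c)^(n-1) \<le> exp (-\<mu>/\<rho> - \<mu>) * exp (\<mu>/\<rho> + \<mu> + E)"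
      using b1 e1 by (intro mult_left_mono) auto
    also have "\<dots> = exp E" by (simp add: exp_add[symmetric])
    finally show ?thesis .
  qed
  have t0: "exp (-\<mu>/\<rho>) * (1 - 1/2 + 1/2 * exp c)^(n-1) \<le> exp E"
  proof -
    have "exp (-\<mu>/\<rho>) * (1 - 1/2 + 1/2 * exp c)^(n-1) \<le> exp (-\<mu>/\<rho>) * exp (\<mu>/\<rho> + E)"
      using b0 e0 by (intro mult_left_mono) auto
    also have "\<dots> = exp E" by (simp add: exp_add[symmetric])
    finally show ?thesis .
  qed
  have "\<rho> * (exp (-\<mu>/\<rho> - \<mu>) * (1 - p1 + p1 * exp c)^(n-1)) + (1-\<rho>) * (exp (-\<mu>/\<rho>) * (1 - 1/2 + 1/2 * exp c)^(n-1))
     \<le> \<rho> * exp E + (1-\<rho>) * exp E"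
    using r t1 t0 by (intro add_mono mult_left_mono) auto
  also have "\<dots> = exp E" by (simp add: algebra_simps)
  finally show ?thesis unfolding q1 N(1) E_def using q0 by (simp only: mult.assoc)
qed

definition Wf :: "nat \<Rightarrow> real \<Rightarrow> (nat \<Rightarrow> bool) \<Rightarrow> (nat \<times> nat \<Rightarrow> bool) \<Rightarrow> real" where
  "Wf n \<rho> v Y = (2 / \<rho>) * ((1 / (real n - 1)) * (\<Sum>i=2..n. of_bool (Y (1, i))) - 1/2) - of_bool (v 1)"

lemma mgf:
  fixes \<mu> \<rho> :: real and n :: nat
  assumes n: "2 \<le> n" and r: "0 < \<rho>" "\<rho> \<le> 1"
  shows "(\<integral>\<^sup>+ z. ennreal (exp (\<mu> * Wf n \<rho> (fst z) (snd z))) \<partial>planted_clique n \<rho>)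
          \<le> ennreal (exp (\<mu>^2 / (2 * \<rho>^2 * (real n - 1))))"
proof -
  define c where "c = \<mu> * 2 / (\<rho> * (real n - 1))"
  define K where "K = (\<lambda>b. exp (-\<mu>/\<rho> - \<mu> * of_bool b))"
  define m where "m = (\<lambda>b. if b then exp c else (1 + exp c)/2)"
  have N: "real n - 1 > 0" using n by simp
  have W: "exp (\<mu> * Wf n \<rho> v Y) = K (v 1) * exp (c * (\<Sum>i=2..n. of_bool (Y (1, i))))" for v Y
  proof -
    have "\<mu> * Wf n \<rho> v Y = (-\<mu>/\<rho> - \<mu> * of_bool (v 1)) + c * (\<Sum>i=2..n. of_bool (Y (1, i)))"
      unfolding Wf_def c_def using N r by (simp add: field_simps)
    thus ?thesis by (simp add: K_def exp_add)
  qed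
  have inner: "(\<integral>\<^sup>+ Y. ennreal (exp (\<mu> * Wf n \<rho> v Y)) \<partial>pc_Y_pmf n v)
       = ennreal (K (v 1) * (\<Prod>i\<in>{2..n}. m (v 1 \<and> v i)))" for v
  proof -
    have "(\<integral>\<^sup>+ Y. ennreal (exp (\<mu> * Wf n \<rho> v Y)) \<partial>pc_Y_pmf n v)
        = ennreal (measure_pmf.expectation (pc_Y_pmf n v) (\<lambda>Y. exp (\<mu> * Wf n \<rho> v Y)))"
      by (rule nn_integral_eq_integral) (auto intro!: integrable_measure_pmf_finite fin_Y)
    also have "measure_pmf.expectation (pc_Y_pmf n v) (\<lambda>Y. exp (\<mu> * Wf n \<rho> v Y))
        = K (v 1) * measure_pmf.expectation (pc_Y_pmf n v) (\<lambda>Y. exp (c * (\<Sum>i=2..n. of_bool (Y (1, i)))))"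
      unfolding W by simp
    also have "\<dots> = K (v 1) * (\<Prod>i\<in>{2..n}. m (v 1 \<and> v i))"
      unfolding Y_mgf m_def by simp
    finally show ?thesis .
  qed
  have "(\<integral>\<^sup>+ z. ennreal (exp (\<mu> * Wf n \<rho> (fst z) (snd z))) \<partial>planted_clique n \<rho>)
      = (\<integral>\<^sup>+ v. (\<integral>\<^sup>+ Y. ennreal (exp (\<mu> * Wf n \<rho> v Y)) \<partial>pc_Y_pmf n v) \<partial>pc_v_pmf n \<rho>)"
    unfolding planted_clique_def by (simp add: nn_integral_return)
  also have "\<dots> = (\<integral>\<^sup>+ v. ennreal (K (v 1) * (\<Prod>i\<in>{2..n}. m (v 1 \<and> v i))) \<partial>pc_v_pmf n \<rho>)"
    unfolding inner ..
  also have "\<dots> = ennreal (measure_pmf.expectation (pc_v_pmf n \<rho>) (\<lambda>v. K (v 1) * (\<Prod>i\<in>{2..n}. m (v 1 \<and> v i))))"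
    by (rule nn_integral_eq_integral)
       (auto intro!: integrable_measure_pmf_finite fin_v AE_pmfI mult_nonneg_nonneg prod_nonneg
             simp: K_def m_def add_nonneg_nonneg)
  also have "measure_pmf.expectation (pc_v_pmf n \<rho>) (\<lambda>v. K (v 1) * (\<Prod>i\<in>{2..n}. m (v 1 \<and> v i)))
     = \<rho> * K True * (\<rho> * m True + (1-\<rho>) * m False)^(n-1) + (1-\<rho>) * K False * m False^(n-1)"
    by (rule v_mgf) (use n r in \<open>auto simp: m_def add_nonneg_nonneg\<close>)
  also have "\<dots> \<le> exp (\<mu>^2 / (2 * \<rho>^2 * (real n - 1)))"
    using mgf_real[OF n r, of \<mu>] unfolding K_def m_def c_def by simp
  finally show ?thesis by (simp add: ennreal_leI)
qed



lemma exp_ge_term: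
  fixes x :: real
  assumes "0 \<le> x"
  shows "x^k / fact k \<le> exp x"
proof -
  have s: "(\<lambda>n. x^n /\<^sub>R fact n) sums exp x" by (rule exp_converges)
  have "sum (\<lambda>n. x^n /\<^sub>R fact n) {k} \<le> suminf (\<lambda>n. x^n /\<^sub>R fact n)"
    by (rule sum_le_suminf) (use s assms in \<open>auto simp: sums_iff\<close>)
  thus ?thesis using s by (simp add: sums_iff divide_inverse mult.commute)
qed

lemma pow_le_exp:
  fixes t lam :: real
  assumes "0 \<le> t" "0 < lam"
  shows "t^k \<le> fact k / lam^k * exp (lam * t)"
proof -
  have "(lam*t)^k / fact k \<le> exp (lam * t)" using assms by (intro exp_ge_term) auto
  hence "(lam*t)^k \<le> fact k * exp (lam * t)" by (simp add: field_simps)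
  hence "t^k * lam^k \<le> fact k * exp (lam * t)"
    by (simp add: power_mult_distrib mult.commute)
  thus ?thesis using assms by (simp add: pos_le_divide_eq)
qed

lemma onept:
  fixes t :: real
  assumes "0 \<le> t"
  shows "(1+t)^(2*l) \<le> 4^l * (1 + t^(2*l))"
proof (cases "t \<le> 1")
  case True
  have "(1+t)^(2*l) \<le> 2^(2*l)" using True assms by (intro power_mono) auto
  also have "(2::real)^(2*l) = 4^l" by (simp add: power_mult)
  moreover have "(4::real)^l * 1 \<le> 4^l * (1 + t^(2*l))" using assms by (intro mult_left_mono) auto
  ultimately show ?thesis by linarith
next
  case False
  have "(1+t)^(2*l) \<le> (2*t)^(2*l)" using False assms by (intro power_mono) auto
  also have "(2*t)^(2*l) = 4^l * t^(2*l)"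
  proof -
    have "(2::real)^(2*l) = 4^l" by (simp add: power_mult)
    thus ?thesis by (simp only: power_mult_distrib)
  qed
  moreover have "(4::real)^l * t^(2*l) \<le> 4^l * (1 + t^(2*l))" using assms by (intro mult_left_mono) auto
  ultimately show ?thesis by linarith
qed

lemma pw_bound:
  fixes t lam :: real
  assumes t: "0 \<le> t" and lam: "0 < lam"
  shows "(real (2*l+1) * 4^l * (t * (t*(1+t))^l))^2
     \<le> real (2*l+1)^2 * 64^l * (fact (2*l+2) / lam^(2*l+2) + fact (4*l+2) / lam^(4*l+2)) * exp (lam * t)"
proof -
  define D where "D = real (2*l+1)"
  have "(D * 4^l * (t * (t*(1+t))^l))^2 = D^2 * 16^l * (t^(2*l+2) * (1+t)^(2*l))"
  proof -
    have a: "t * (t*(1+t))^l = t^(l+1) * (1+t)^l" by (simp add: power_mult_distrib)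
    have e: "2*l+2 = (l+1)*2" "2*l = l*2" by simp_all
    have b: "(t^(l+1))^2 = t^(2*l+2)" "((1+t)^l)^2 = (1+t)^(2*l)" "((4::real)^l)^2 = 16^l"
        apply (subst e(1), rule power_mult[symmetric])
       apply (subst e(2), rule power_mult[symmetric])
      by (simp add: power2_eq_square power_mult_distrib[symmetric])
    show ?thesis unfolding a by (simp only: power_mult_distrib b mult_ac)
  qed
  also have "\<dots> \<le> D^2 * 16^l * (t^(2*l+2) * (4^l * (1 + t^(2*l))))"
    using onept[OF t, of l] t by (intro mult_left_mono) auto
  also have "\<dots> = D^2 * 64^l * (t^(2*l+2) + t^(4*l+2))"
  proof -
    have x: "t^(2*l+2) * t^(2*l) = t^(4*l+2)" by (simp add: power_add[symmetric])
    have y: "(16::real)^l * 4^l = 64^l" by (simp add: power_mult_distrib[symmetric])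
    have "D^2 * 16^l * (t^(2*l+2) * (4^l * (1 + t^(2*l)))) = D^2 * (16^l * 4^l) * (t^(2*l+2) + t^(2*l+2) * t^(2*l))"
      by (simp only: distrib_left distrib_right mult_1_right mult_1_left mult_ac)
    thus ?thesis unfolding x y .
  qed
  also have "\<dots> \<le> D^2 * 64^l * (fact (2*l+2) / lam^(2*l+2) * exp (lam * t) + fact (4*l+2) / lam^(4*l+2) * exp (lam * t))"
    by (intro mult_left_mono add_mono pow_le_exp[OF t lam]) auto
  finally show ?thesis by (simp add: D_def algebra_simps)
qed



lemma numeric:
  fixes r :: real and l :: nat
  assumes r: "0 < r" "r < 1"
  defines "D \<equiv> real (2*l+1)"
  defines "lam \<equiv> 50 * D / r"
  shows "2 * (D^2 * 64^l * (fact (2*l+2) / lam^(2*l+2) + fact (4*l+2) / lam^(4*l+2))) * exp (D/2)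
          \<le> D^2 * r^(2*l)"
proof -
  have D: "D \<ge> 1" by (simp add: D_def)
  have lam: "lam > 0" using r D by (simp add: lam_def)
  have fk: "fact k / lam^k \<le> (r/25)^k" if k: "k \<le> 4*l+2" for k
  proof -
    have "(fact k :: real) \<le> real (k^k)" by (rule fact_le_power)
    also have "real (k^k) = real k ^ k" by simp
    also have "\<dots> \<le> (2*D)^k" using k by (intro power_mono) (auto simp: D_def)
    finally have "fact k / lam^k \<le> (2*D)^k / lam^k" using lam by (intro divide_right_mono) auto
    also have "(2*D)^k / lam^k = (r/25)^k"
      using D r unfolding lam_def power_divide[symmetric] by (simp add: field_simps)
    finally show ?thesis .
  qed
  have rk: "(r/25)^k \<le> (r/25)^(2*l) / 625" if k: "2*l+2 \<le> k" for k
  proof -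
    have "(r/25)^k = (r/25)^(2*l) * (r/25)^(k - 2*l)"
      using k by (simp add: power_add[symmetric])
    also have "(r/25)^(k - 2*l) \<le> (r/25)^2" using k r by (intro power_decreasing) auto
    hence "(r/25)^(2*l) * (r/25)^(k - 2*l) \<le> (r/25)^(2*l) * (r/25)^2"
      using r by (intro mult_left_mono) auto
    also have "(r/25)^2 \<le> (1/25)^2" using r by (intro power_mono) auto
    hence "(r/25)^(2*l) * (r/25)^2 \<le> (r/25)^(2*l) * (1/25)^2" using r by (intro mult_left_mono) auto
    finally show ?thesis by (simp add: power2_eq_square)
  qed
  have S: "fact (2*l+2) / lam^(2*l+2) + fact (4*l+2) / lam^(4*l+2) \<le> 2/625 * (r^(2*l) / 625^l)"
  proof -
    have "fact (2*l+2) / lam^(2*l+2) + fact (4*l+2) / lam^(4*l+2) \<le> (r/25)^(2*l) / 625 + (r/25)^(2*l) / 625"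
      using fk[of "2*l+2"] fk[of "4*l+2"] rk[of "2*l+2"] rk[of "4*l+2"] by simp
    also have "(r/25)^(2*l) = r^(2*l) / 625^l" by (simp add: power_divide power_mult)
    finally show ?thesis by simp
  qed
  have E: "exp (D/2) \<le> 2 * 3^l"
  proof -
    have e1: "exp (1/2::real) \<le> 2"
    proof -
      have "exp (1/2::real) * exp (1/2) = exp 1" by (simp add: exp_add[symmetric])
      hence "exp (1/2::real) * exp (1/2) \<le> 2 * 2" using exp_le by simp
      thus ?thesis by (metis mult_mono linorder_not_le exp_ge_zero less_le_not_le zero_le_numeral mult_strict_mono')
    qed
    have "exp (D/2) = exp (1/2) * exp 1 ^ l"
      by (simp add: D_def exp_add[symmetric] exp_of_nat_mult[symmetric] field_simps)
    also have "\<dots> \<le> 2 * 3^l" using e1 exp_le by (intro mult_mono power_mono) auto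
    finally show ?thesis .
  qed
  have "2 * (D^2 * 64^l * (fact (2*l+2) / lam^(2*l+2) + fact (4*l+2) / lam^(4*l+2))) * exp (D/2)
      \<le> 2 * (D^2 * 64^l * (2/625 * (r^(2*l) / 625^l))) * (2 * 3^l)"
    using S E r by (intro mult_mono mult_left_mono) (auto intro!: add_nonneg_nonneg)
  also have "\<dots> = D^2 * r^(2*l) * (8/625 * ((64 * 3)^l / 625^l))"
  proof -
    have "(192::real)^l = 64^l * 3^l" by (simp add: power_mult_distrib[symmetric])
    thus ?thesis by (simp add: field_simps)
  qed
  also have "\<dots> \<le> D^2 * r^(2*l) * 1"
  proof -
    have "((64 * 3::real)^l / 625^l) \<le> 1" by (simp add: power_divide[symmetric] power_le_one)
    hence "8/625 * ((64 * 3::real)^l / 625^l) \<le> 8/625 * 1" by (intro mult_left_mono) auto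
    hence "8/625 * ((64 * 3::real)^l / 625^l) \<le> 1" by linarith
    thus ?thesis using r by (intro mult_left_mono) auto
  qed
  finally show ?thesis by simp
qed


theorem mainTheorem14:
  fixes n l :: nat and \<rho> r :: real
  assumes "n \<ge> 2"
    and "0 < \<rho>" and "\<rho> < 1" and "\<rho> \<le> 1/2"
    and "0 < r" and "r < 1"
    and "\<rho>^2 \<ge> 432 / (r^2 * (real n - 1)) * (ln 4 + 3 * real (2*l+1) * ln (9 / \<rho>))"
  shows "measure_pmf.expectation (planted_clique n \<rho>)
           (\<lambda>(v, Y). (pc_estimator n \<rho> l Y - of_bool (v 1))^2)
         \<le> real (2*l+1)^2 * r ^ (2*l)"
proof -
  note n = assms(1) and rho = assms(2,3,4) and r = assms(5,6) and H = assms(7)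
  define D where "D = real (2*l+1)"
  define lam where "lam = 50 * D / r"
  define A where "A = D^2 * 64^l * (fact (2*l+2) / lam^(2*l+2) + fact (4*l+2) / lam^(4*l+2))"
  define N where "N = real n - 1"
  define E0 where "E0 = exp (lam^2 / (2 * \<rho>^2 * N))"
  have D1: "D \<ge> 1" by (simp add: D_def)
  have Npos: "N > 0" using n by (simp add: N_def)
  have lampos: "lam > 0" using D1 r by (simp add: lam_def)
  have Apos: "A \<ge> 0" unfolding A_def using lampos by (intro mult_nonneg_nonneg add_nonneg_nonneg) auto
  have hexp: "lam^2 / (2 * \<rho>^2 * N) \<le> D/2"
  proof -
    have l9: "2 \<le> ln (9 / \<rho>)"
    proof -
      have "exp (2::real) = exp 1 * exp 1" by (simp add: exp_add[symmetric])
      also have "\<dots> \<le> 3 * 3" using exp_le by (intro mult_mono) auto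
      also have "(3::real) * 3 \<le> 9 / \<rho>" using rho by (simp add: field_simps)
      finally show ?thesis using rho by (subst ln_ge_iff) auto
    qed
    have L: "6 * D \<le> ln 4 + 3 * D * ln (9 / \<rho>)"
    proof -
      have "3 * D * 2 \<le> 3 * D * ln (9 / \<rho>)" using l9 D1 by (intro mult_left_mono) auto
      moreover have "0 \<le> ln (4::real)" by simp
      ultimately show ?thesis by linarith
    qed
    have "432 / (r^2 * N) * (6 * D) \<le> 432 / (r^2 * N) * (ln 4 + 3 * D * ln (9 / \<rho>))"
      using L r Npos by (intro mult_left_mono) auto
    also have "\<dots> \<le> \<rho>^2" using H by (simp add: D_def N_def)
    finally have "2592 * D / (r^2 * N) \<le> \<rho>^2" by simp
    hence X: "2592 * D \<le> \<rho>^2 * (r^2 * N)" using r Npos by (simp add: pos_divide_le_eq)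
    have "lam^2 / (2 * \<rho>^2 * N) = 1250 * D^2 / (\<rho>^2 * (r^2 * N))"
      using r rho Npos unfolding lam_def by (simp add: field_simps power2_eq_square)
    also have "\<dots> \<le> 1250 * D^2 / (2592 * D)"
      using X D1 by (intro divide_left_mono) auto
    also have "\<dots> \<le> D/2" using D1 by (simp add: field_simps power2_eq_square)
    finally show ?thesis .
  qed
  have E0le: "E0 \<le> exp (D/2)" unfolding E0_def using hexp by simp
  have pw: "(pc_estimator n \<rho> l Y - of_bool (v 1))^2
     \<le> A * exp (lam * Wf n \<rho> v Y) + A * exp ((-lam) * Wf n \<rho> v Y)" for v Y
  proof -
    define W where "W = Wf n \<rho> v Y"
    define a :: real where "a = of_bool (v 1)"
    have est: "pc_estimator n \<rho> l Y = tau l (W + a)"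
      unfolding pc_estimator_def W_def Wf_def a_def by simp
    have a01: "a = 0 \<or> a = 1" by (simp add: a_def)
    have "\<bar>tau l (W + a) - a\<bar> \<le> D * 4^l * (\<bar>W\<bar> * (\<bar>W\<bar> * (1 + \<bar>W\<bar>))^l)"
      using tau_diff[OF a01, of l "W + a"] by (simp add: D_def)
    hence "\<bar>tau l (W + a) - a\<bar>^2 \<le> (D * 4^l * (\<bar>W\<bar> * (\<bar>W\<bar> * (1 + \<bar>W\<bar>))^l))^2"
      by (intro power_mono) auto
    also have "\<dots> \<le> A * exp (lam * \<bar>W\<bar>)"
      using pw_bound[of "\<bar>W\<bar>" lam l] lampos by (simp add: A_def D_def)
    also have "\<dots> \<le> A * (exp (lam * W) + exp ((-lam) * W))"
      using Apos by (intro mult_left_mono) (auto simp: abs_if add_nonneg_nonneg add_increasing add_increasing2)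
    finally show ?thesis unfolding est W_def a_def by (simp add: algebra_simps)
  qed
  have M1: "(\<integral>\<^sup>+ z. ennreal (exp (lam * Wf n \<rho> (fst z) (snd z))) \<partial>planted_clique n \<rho>) \<le> ennreal E0"
    using mgf[OF n rho(1), of lam] rho unfolding E0_def N_def by simp
  have M2: "(\<integral>\<^sup>+ z. ennreal (exp ((-lam) * Wf n \<rho> (fst z) (snd z))) \<partial>planted_clique n \<rho>) \<le> ennreal E0"
    using mgf[OF n rho(1), of "-lam"] rho unfolding E0_def N_def by simp
  have "(\<integral>\<^sup>+ z. ennreal ((\<lambda>(v, Y). (pc_estimator n \<rho> l Y - of_bool (v 1))^2) z) \<partial>planted_clique n \<rho>)
      \<le> (\<integral>\<^sup>+ z. (ennreal A * ennreal (exp (lam * Wf n \<rho> (fst z) (snd z)))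
              + ennreal A * ennreal (exp ((-lam) * Wf n \<rho> (fst z) (snd z)))) \<partial>planted_clique n \<rho>)"
  proof (rule nn_integral_mono)
    fix z :: "(nat \<Rightarrow> bool) \<times> (nat \<times> nat \<Rightarrow> bool)"
    obtain v Y where z: "z = (v, Y)" by (cases z)
    have "ennreal ((pc_estimator n \<rho> l Y - of_bool (v 1))^2)
       \<le> ennreal (A * exp (lam * Wf n \<rho> v Y) + A * exp ((-lam) * Wf n \<rho> v Y))"
      by (rule ennreal_leI[OF pw])
    also have "\<dots> = ennreal A * ennreal (exp (lam * Wf n \<rho> v Y)) + ennreal A * ennreal (exp ((-lam) * Wf n \<rho> v Y))"
      using Apos by (simp add: ennreal_plus ennreal_mult)
    finally show "ennreal ((\<lambda>(v, Y). (pc_estimator n \<rho> l Y - of_bool (v 1))^2) z)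
       \<le> ennreal A * ennreal (exp (lam * Wf n \<rho> (fst z) (snd z))) + ennreal A * ennreal (exp ((-lam) * Wf n \<rho> (fst z) (snd z)))"
      by (simp add: z)
  qed
  also have "\<dots> = ennreal A * (\<integral>\<^sup>+ z. ennreal (exp (lam * Wf n \<rho> (fst z) (snd z))) \<partial>planted_clique n \<rho>)
      + ennreal A * (\<integral>\<^sup>+ z. ennreal (exp ((-lam) * Wf n \<rho> (fst z) (snd z))) \<partial>planted_clique n \<rho>)"
    by (simp add: nn_integral_add nn_integral_cmult)
  also have "\<dots> \<le> ennreal A * ennreal E0 + ennreal A * ennreal E0"
    using M1 M2 by (intro add_mono mult_left_mono) auto
  also have "\<dots> = ennreal (2 * A * E0)"
    using Apos by (simp add: ennreal_plus[symmetric] ennreal_mult[symmetric] E0_def)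
  finally have nn: "(\<integral>\<^sup>+ z. ennreal ((\<lambda>(v, Y). (pc_estimator n \<rho> l Y - of_bool (v 1))^2) z) \<partial>planted_clique n \<rho>)
      \<le> ennreal (2 * A * E0)" .
  have "measure_pmf.expectation (planted_clique n \<rho>) (\<lambda>(v, Y). (pc_estimator n \<rho> l Y - of_bool (v 1))^2)
      = enn2real (\<integral>\<^sup>+ z. ennreal ((\<lambda>(v, Y). (pc_estimator n \<rho> l Y - of_bool (v 1))^2) z) \<partial>planted_clique n \<rho>)"
    by (rule integral_eq_nn_integral) (auto simp: case_prod_beta)
  also have "\<dots> \<le> 2 * A * E0"
    using nn Apos by (intro enn2real_leI) (auto simp: E0_def)
  also have "\<dots> \<le> 2 * A * exp (D/2)" using E0le Apos by (intro mult_left_mono) auto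
  also have "\<dots> \<le> D^2 * r^(2*l)"
    using numeric[OF r, of l] unfolding A_def lam_def D_def by (simp add: mult.assoc)
  finally show ?thesis by (simp add: D_def)
qed

end
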